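(* For every integer $n\ge1$ there exists a graph (multigraph) $\mathcal{G}=(\mathcal{V},\mathcal{E})$ with $V=n+1$ vertices such that for any algorithm $\mathcal{A}$ that is $(\epsilon,\delta)$-differentially private on $\mathcal{G}$ and outputs a spanning tree of $\mathcal{G}$, there exist edge weights $w:\mathcal{E}\to\{0,1\}$ such that the expected weight of the spanning tree $\mathcal{A}(w)$ exceeds the weight of the minimum spanning tree of $(\mathcal{G},w)$ by at least $\alpha=(V-1)\cdot\frac{1-(1+e^{\epsilon})\delta}{1+e^{2\epsilon}}$. In particular, for sufficiently small $\epsilon$ and $\delta$, $\alpha\ge0.49(V-1)$.
   Context: Private edge weight model (with real, possibly negative, weights): for a graph $\mathcal{G}=(\mathcal{V},\mathcal{E})$ (parallel edges allowed), a weight function is $w:\mathcal{E}\to\mathbb{R}$. Two weight functions $w,w'$ are neighboring if $\sum_{e\in\mathcal{E}}|w(e)-w'(e)|\le1$. A randomized algorithm $\mathcal{A}$ on weight functions is $(\epsilon,\delta)$-differentially private on $\mathcal{G}$ if for all neighboring $w,w'$ and all sets $S$ of outputs, $\Pr[\mathcal{A}(w)\in S]\le e^{\epsilon}\Pr[\mathcal{A}(w')\in S]+\delta$. The weight of a spanning tree is the sum of the weights of its edges. *)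

theory Defs
  imports "HOL-Probability.Probability"
begin

text \<open>A (loopless) multigraph is given by a finite vertex set V, a finite edge set E
  and an endpoint map ends; parallel edges are allowed since ends need not be injective.\<close>

definition multigraph :: "'v set \<Rightarrow> 'e set \<Rightarrow> ('e \<Rightarrow> 'v \<times> 'v) \<Rightarrow> bool" where
  "multigraph V E ends \<longleftrightarrow> finite V \<and> finite E \<and>
     (\<forall>e\<in>E. fst (ends e) \<in> V \<and> snd (ends e) \<in> V \<and> fst (ends e) \<noteq> snd (ends e))"

definition adj :: "('e \<Rightarrow> 'v \<times> 'v) \<Rightarrow> 'e set \<Rightarrow> 'v \<Rightarrow> 'v \<Rightarrow> bool" where
  "adj ends F u v \<longleftrightarrow> (\<exists>e\<in>F. ends e = (u, v) \<or> ends e = (v, u))"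

definition connected_by :: "'v set \<Rightarrow> ('e \<Rightarrow> 'v \<times> 'v) \<Rightarrow> 'e set \<Rightarrow> bool" where
  "connected_by V ends F \<longleftrightarrow> (\<forall>u\<in>V. \<forall>v\<in>V. (adj ends F)\<^sup>*\<^sup>* u v)"

text \<open>Spanning tree: a set of edges forming a connected spanning subgraph with |V| - 1 edges
  (equivalently, connected and acyclic).\<close>
definition spanning_tree :: "'v set \<Rightarrow> 'e set \<Rightarrow> ('e \<Rightarrow> 'v \<times> 'v) \<Rightarrow> 'e set \<Rightarrow> bool" where
  "spanning_tree V E ends T \<longleftrightarrow> T \<subseteq> E \<and> connected_by V ends T \<and> card T + 1 = card V"

definition tree_weight :: "('e \<Rightarrow> real) \<Rightarrow> 'e set \<Rightarrow> real" where
  "tree_weight w T = (\<Sum>e\<in>T. w e)"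

definition mst_weight :: "'v set \<Rightarrow> 'e set \<Rightarrow> ('e \<Rightarrow> 'v \<times> 'v) \<Rightarrow> ('e \<Rightarrow> real) \<Rightarrow> real" where
  "mst_weight V E ends w = Min {tree_weight w T | T. spanning_tree V E ends T}"

definition neighboring :: "'e set \<Rightarrow> ('e \<Rightarrow> real) \<Rightarrow> ('e \<Rightarrow> real) \<Rightarrow> bool" where
  "neighboring E w w' \<longleftrightarrow> (\<Sum>e\<in>E. \<bar>w e - w' e\<bar>) \<le> 1"

definition edge_dp :: "real \<Rightarrow> real \<Rightarrow> 'e set \<Rightarrow> (('e \<Rightarrow> real) \<Rightarrow> 'o pmf) \<Rightarrow> bool" where
  "edge_dp \<epsilon> \<delta> E A \<longleftrightarrow> (\<forall>w w' S. neighboring E w w' \<longrightarrow>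
      measure_pmf.prob (A w) S \<le> exp \<epsilon> * measure_pmf.prob (A w') S + \<delta>)"

definition alpha_bound :: "nat \<Rightarrow> real \<Rightarrow> real \<Rightarrow> real" where
  "alpha_bound nV \<epsilon> \<delta> = (real nV - 1) * (1 - (1 + exp \<epsilon>) * \<delta>) / (1 + exp (2 * \<epsilon>))"

end

theory Submission
  imports Defs
begin

definition sV :: "nat \<Rightarrow> nat set" where "sV n = {0..n}"
definition sE :: "nat \<Rightarrow> nat set" where "sE n = {2..2*n+1}"
definition sends :: "nat \<Rightarrow> nat \<times> nat" where "sends e = (0, e div 2)"
definition wS :: "nat set \<Rightarrow> nat \<Rightarrow> real" where
  "wS S e = (if (e div 2 \<in> S) = even e then 1 else 0)"
definition hv :: "nat set \<Rightarrow> nat \<Rightarrow> nat" where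
  "hv S i = (if i \<in> S then 2*i else 2*i+1)"
definition lt :: "nat set \<Rightarrow> nat \<Rightarrow> nat" where
  "lt S i = (if i \<in> S then 2*i+1 else 2*i)"

lemma conn_lemma:
  assumes "\<forall>v\<in>V. v \<noteq> 0 \<longrightarrow> (\<exists>e\<in>F. ends e = (0,v))"
  shows "connected_by V ends F"
proof -
  have a: "(adj ends F)\<^sup>*\<^sup>* 0 v \<and> (adj ends F)\<^sup>*\<^sup>* v 0" if "v \<in> V" for v
  proof (cases "v = 0")
    case True then show ?thesis by simp
  next
    case False
    then have "\<exists>e\<in>F. ends e = (0,v)" using assms that by simp
    then obtain e where "e \<in> F" "ends e = (0,v)" by (elim bexE)
    then have "adj ends F 0 v" "adj ends F v 0" unfolding adj_def by auto
    then show ?thesis by (metis r_into_rtranclp)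
  qed
  show ?thesis unfolding connected_by_def
    by (meson a rtranclp_trans)
qed

lemma meets:
  assumes st: "spanning_tree (sV n) (sE n) sends T" and i: "i \<in> {1..n}"
  shows "2*i \<in> T \<or> 2*i+1 \<in> T"
proof -
  have "(adj sends T)\<^sup>*\<^sup>* 0 i" using st i unfolding spanning_tree_def connected_by_def sV_def by auto
  moreover have "i \<noteq> 0" using i by auto
  ultimately obtain y where "adj sends T y i" by (metis rtranclp.cases)
  then obtain e where e: "e \<in> T" "sends e = (y,i) \<or> sends e = (i,y)" unfolding adj_def by auto
  have "e div 2 = i" using e(2) \<open>i \<noteq> 0\<close> unfolding sends_def by auto
  then have "e = 2*i \<or> e = 2*i+1" by presburger
  then show ?thesis using e(1) by auto
qed

lemma lt_tree:
  assumes "S \<subseteq> {1..n}"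
  shows "spanning_tree (sV n) (sE n) sends (lt S ` {1..n})" and "tree_weight (wS S) (lt S ` {1..n}) = 0"
proof -
  have inj: "inj_on (lt S) {1..n}"
    unfolding inj_on_def lt_def by (auto split: if_splits)
  have sub: "lt S ` {1..n} \<subseteq> sE n" unfolding lt_def sE_def by auto
  have d: "lt S i div 2 = i" for i unfolding lt_def by auto
  have c: "connected_by (sV n) sends (lt S ` {1..n})"
  proof (rule conn_lemma, intro ballI impI)
    fix v assume "v \<in> sV n" "v \<noteq> 0"
    then have "v \<in> {1..n}" unfolding sV_def by auto
    then show "\<exists>e\<in>lt S ` {1..n}. sends e = (0, v)" using d unfolding sends_def by auto
  qed
  show "spanning_tree (sV n) (sE n) sends (lt S ` {1..n})"
    unfolding spanning_tree_def using sub c card_image[OF inj] by (simp add: sV_def)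
  have "wS S e = 0" if "e \<in> lt S ` {1..n}" for e
    using that unfolding wS_def lt_def by (auto split: if_splits)
  then show "tree_weight (wS S) (lt S ` {1..n}) = 0" unfolding tree_weight_def by simp
qed

lemma mst_le0:
  assumes "S \<subseteq> {1..n}"
  shows "mst_weight (sV n) (sE n) sends (wS S) \<le> 0"
proof -
  let ?M = "{tree_weight (wS S) T | T. spanning_tree (sV n) (sE n) sends T}"
  have "?M \<subseteq> tree_weight (wS S) ` Pow (sE n)" unfolding spanning_tree_def by blast
  then have f: "finite ?M" by (rule finite_subset) (simp add: sE_def)
  have "0 \<in> ?M"
  proof (rule CollectI, rule exI[where x="lt S ` {1..n}"])
    show "0 = tree_weight (wS S) (lt S ` {1..n}) \<and> spanning_tree (sV n) (sE n) sends (lt S ` {1..n})"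
      using lt_tree[OF assms] by simp
  qed
  then show ?thesis unfolding mst_weight_def using Min_le[OF f] by blast
qed

lemma tw_eq:
  assumes "T \<subseteq> sE n" "S \<subseteq> {1..n}"
  shows "tree_weight (wS S) T = (\<Sum>i\<in>{1..n}. indicator {T. hv S i \<in> T} T)"
proof -
  have fT: "finite T" using assms(1) finite_subset by (auto simp: sE_def)
  have inj: "inj_on (hv S) {1..n}" unfolding inj_on_def hv_def by (auto split: if_splits)
  have H: "{e\<in>T. wS S e = 1} = T \<inter> hv S ` {1..n}"
  proof -
    have "e \<in> hv S ` {1..n}" if "e \<in> T" "wS S e = 1" for e
    proof -
      have "e \<in> {2..2*n+1}" using that assms(1) by (auto simp: sE_def)
      then have "e div 2 \<in> {1..n}" by auto
      moreover have "hv S (e div 2) = e" using that(2) unfolding wS_def hv_def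
        by (auto split: if_splits)
      ultimately show ?thesis by force
    qed
    moreover have "wS S (hv S i) = 1" for i unfolding wS_def hv_def by auto
    ultimately show ?thesis by auto
  qed
  have "tree_weight (wS S) T = (\<Sum>e\<in>T. if wS S e = 1 then 1 else 0)"
    unfolding tree_weight_def by (rule sum.cong) (auto simp: wS_def)
  also have "\<dots> = real (card {e\<in>T. wS S e = 1})"
    using fT by (simp add: sum.If_cases Int_def)
  also have "\<dots> = real (card (T \<inter> hv S ` {1..n}))" using H by simp
  also have "\<dots> = (\<Sum>e\<in>hv S ` {1..n}. indicator T e)"
  proof -
    have "(\<Sum>e\<in>hv S ` {1..n}. indicator T e :: real) = of_nat (card (hv S ` {1..n} \<inter> T))"
      by (simp add: indicator_def sum.If_cases)
    then show ?thesis by (simp add: inf_commute)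
  qed
  also have "\<dots> = (\<Sum>i\<in>{1..n}. indicator T (hv S i))"
    by (rule sum.reindex[OF inj, unfolded comp_def])
  also have "\<dots> = (\<Sum>i\<in>{1..n}. indicator {T. hv S i \<in> T} T)"
    by (simp add: indicator_def)
  finally show ?thesis .
qed

lemma neigh1:
  assumes "finite E" "\<bar>f x - v\<bar> \<le> 1"
  shows "neighboring E f (f(x:=v))" "neighboring E (f(x:=v)) f"
proof -
  have "(\<Sum>e\<in>E. \<bar>f e - (f(x:=v)) e\<bar>) = (\<Sum>e\<in>E. if e = x then \<bar>f x - v\<bar> else 0)"
    by (rule sum.cong) auto
  also have "\<dots> = (if x \<in> E then \<bar>f x - v\<bar> else 0)" using assms(1) by (simp add: sum.delta)
  finally show "neighboring E f (f(x:=v))" using assms(2) unfolding neighboring_def by auto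
  have "(\<Sum>e\<in>E. \<bar>(f(x:=v)) e - f e\<bar>) = (\<Sum>e\<in>E. if e = x then \<bar>f x - v\<bar> else 0)"
    by (rule sum.cong) auto
  also have "\<dots> = (if x \<in> E then \<bar>f x - v\<bar> else 0)" using assms(1) by (simp add: sum.delta)
  finally show "neighboring E (f(x:=v)) f" using assms(2) unfolding neighboring_def by auto
qed

lemma dp2:
  assumes "edge_dp \<epsilon> \<delta> E A" "neighboring E w0 wm" "neighboring E wm w1"
  shows "measure_pmf.prob (A w0) X \<le> exp \<epsilon> * exp \<epsilon> * measure_pmf.prob (A w1) X + (1 + exp \<epsilon>) * \<delta>"
proof -
  have a: "measure_pmf.prob (A w0) X \<le> exp \<epsilon> * measure_pmf.prob (A wm) X + \<delta>"
    using assms unfolding edge_dp_def by blast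
  have b: "measure_pmf.prob (A wm) X \<le> exp \<epsilon> * measure_pmf.prob (A w1) X + \<delta>"
    using assms unfolding edge_dp_def by blast
  have "exp \<epsilon> * measure_pmf.prob (A wm) X \<le> exp \<epsilon> * (exp \<epsilon> * measure_pmf.prob (A w1) X + \<delta>)"
    using b by (rule mult_left_mono) simp
  then show ?thesis using a by (simp add: algebra_simps)
qed

lemma cover:
  assumes "\<forall>T\<in>set_pmf p. spanning_tree (sV n) (sE n) sends T" "i \<in> {1..n}"
  shows "measure_pmf.prob p {T. 2*i \<in> T} + measure_pmf.prob p {T. 2*i+1 \<in> T} \<ge> 1"
proof -
  have "measure_pmf.prob p ({T. 2*i \<in> T} \<union> {T. 2*i+1 \<in> T}) = 1"
    using meets[OF _ assms(2)] assms(1) by (subst measure_pmf.prob_eq_1) (auto intro!: AE_pmfI)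
  moreover have "measure_pmf.prob p ({T. 2*i \<in> T} \<union> {T. 2*i+1 \<in> T}) \<le>
      measure_pmf.prob p {T. 2*i \<in> T} + measure_pmf.prob p {T. 2*i+1 \<in> T}"
    by (rule measure_Un_le) auto
  ultimately show ?thesis by linarith
qed

lemma pair_bound:
  assumes dp: "edge_dp \<epsilon> \<delta> (sE n) A"
    and tr: "\<forall>w. \<forall>T\<in>set_pmf (A w). spanning_tree (sV n) (sE n) sends T"
    and S: "S \<subseteq> {1..n}" and i: "i \<in> {1..n}" "i \<notin> S"
  shows "measure_pmf.prob (A (wS S)) {T. hv S i \<in> T} +
         measure_pmf.prob (A (wS (insert i S))) {T. hv (insert i S) i \<in> T}
       \<ge> 2 * ((1 - (1 + exp \<epsilon>) * \<delta>) / (1 + exp (2 * \<epsilon>)))"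
proof -
  define w0 where "w0 = wS S"
  define wm where "wm = w0(2*i := 1)"
  define w1 where "w1 = wS (insert i S)"
  have fE: "finite (sE n)" by (simp add: sE_def)
  have w1eq: "w1 = wm(2*i+1 := 0)"
  proof
    fix e
    show "w1 e = (wm(2*i+1 := 0)) e"
    proof (cases "e div 2 = i")
      case True
      then have "e = 2*i \<or> e = 2*i+1" by presburger
      then show ?thesis
      proof
        assume e: "e = 2*i"
        have "w1 e = 1" unfolding w1_def wS_def e by simp
        moreover have "(wm(2*i+1 := 0)) e = 1" unfolding wm_def e by simp
        ultimately show ?thesis by simp
      next
        assume e: "e = 2*i+1"
        have "w1 e = 0" unfolding w1_def wS_def e by simp
        moreover have "(wm(2*i+1 := 0)) e = 0" unfolding e by simp
        ultimately show ?thesis by simp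
      qed
    next
      case False
      then have ne: "e \<noteq> 2*i" "e \<noteq> 2*i+1" by auto
      have "(e div 2 \<in> insert i S) = (e div 2 \<in> S)" using False by simp
      then have "w1 e = w0 e" unfolding w1_def w0_def wS_def by simp
      then show ?thesis using ne unfolding wm_def by simp
    qed
  qed
  have v0: "w0 (2*i) = 0" using i unfolding w0_def wS_def by auto
  have v1: "wm (2*i+1) = 1" using i unfolding wm_def w0_def wS_def by auto
  have n1: "neighboring (sE n) w0 wm" "neighboring (sE n) wm w0"
    unfolding wm_def using neigh1[OF fE, of w0 "2*i" 1] v0 by auto
  have n2: "neighboring (sE n) wm w1" "neighboring (sE n) w1 wm"
    unfolding w1eq using neigh1[OF fE, of wm "2*i+1" 0] v1 by auto
  let ?Xa = "{T. 2*i \<in> T}" and ?Xb = "{T. 2*i+1 \<in> T}"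
  let ?e = "exp \<epsilon> * exp \<epsilon>" and ?c = "(1 + exp \<epsilon>) * \<delta>"
  have A1: "measure_pmf.prob (A w0) ?Xa \<le> ?e * measure_pmf.prob (A w1) ?Xa + ?c"
    using dp2[OF dp n1(1) n2(1)] .
  have A2: "measure_pmf.prob (A w1) ?Xb \<le> ?e * measure_pmf.prob (A w0) ?Xb + ?c"
    using dp2[OF dp n2(2) n1(2)] .
  have C0: "measure_pmf.prob (A w0) ?Xa + measure_pmf.prob (A w0) ?Xb \<ge> 1"
    using cover[OF _ i(1)] tr by blast
  have C1: "measure_pmf.prob (A w1) ?Xa + measure_pmf.prob (A w1) ?Xb \<ge> 1"
    using cover[OF _ i(1)] tr by blast
  have ee: "exp (2 * \<epsilon>) = ?e" unfolding mult_2 by (rule exp_add)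
  have pos: "1 + exp (2 * \<epsilon>) > 0" by (rule add_pos_pos) simp_all
  define pa where "pa = measure_pmf.prob (A w0) ?Xa"
  define pb where "pb = measure_pmf.prob (A w0) ?Xb"
  define qa where "qa = measure_pmf.prob (A w1) ?Xa"
  define qb where "qb = measure_pmf.prob (A w1) ?Xb"
  define D where "D = 1 + exp (2 * \<epsilon>)"
  have D: "D = 1 + ?e" unfolding D_def ee ..
  have exp1: "D * (pb + qa) = pb + qa + ?e * pb + ?e * qa" unfolding D by (simp add: algebra_simps)
  have "2 - 2 * ?c \<le> D * (pb + qa)"
    using A1 A2 C0 C1 unfolding exp1 pa_def[symmetric] pb_def[symmetric] qa_def[symmetric] qb_def[symmetric]
    by linarith
  then have "(2 - 2 * ?c) / D \<le> pb + qa"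
    using pos unfolding D_def[symmetric] by (simp add: pos_divide_le_eq mult.commute)
  moreover have "2 * ((1 - ?c) / D) = (2 - 2 * ?c) / D" by simp
  ultimately have "2 * ((1 - ?c) / (1 + exp (2 * \<epsilon>))) \<le> measure_pmf.prob (A w0) ?Xb + measure_pmf.prob (A w1) ?Xa"
    unfolding D_def pb_def qa_def by simp
  moreover have "hv S i = 2*i+1" "hv (insert i S) i = 2*i" using i unfolding hv_def by auto
  ultimately show ?thesis unfolding w0_def w1_def by (simp add: add.commute)
qed

lemma avg:
  fixes P :: "nat set \<Rightarrow> nat \<Rightarrow> real"
  assumes fI: "finite I"
    and pr: "\<And>S i. S \<subseteq> I \<Longrightarrow> i \<in> I \<Longrightarrow> i \<notin> S \<Longrightarrow> P S i + P (insert i S) i \<ge> 2 * K"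
  shows "\<exists>S\<subseteq>I. (\<Sum>i\<in>I. P S i) \<ge> real (card I) * K"
proof (rule ccontr)
  assume "\<not> ?thesis"
  then have lt: "\<And>S. S \<in> Pow I \<Longrightarrow> (\<Sum>i\<in>I. P S i) < real (card I) * K" by auto
  have each: "(\<Sum>S\<in>Pow I. P S i) \<ge> 2 ^ card I * K" if i: "i \<in> I" for i
  proof -
    define J where "J = I - {i}"
    have IJ: "I = insert i J" "i \<notin> J" "finite J" using i fI unfolding J_def by auto
    have inj: "inj_on (insert i) (Pow J)" using IJ(2) unfolding inj_on_def by auto
    have disj: "Pow J \<inter> insert i ` Pow J = {}" using IJ(2) by auto
    have "(\<Sum>S\<in>Pow I. P S i) = (\<Sum>S\<in>Pow J. P S i) + (\<Sum>S\<in>insert i ` Pow J. P S i)"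
      unfolding IJ(1) Pow_insert using IJ(3) disj by (simp add: sum.union_disjoint)
    also have "\<dots> = (\<Sum>S\<in>Pow J. P S i + P (insert i S) i)"
      by (simp add: sum.reindex[OF inj] sum.distrib)
    also have "\<dots> \<ge> (\<Sum>S\<in>Pow J. 2 * K)"
      by (rule sum_mono) (use pr IJ in auto)
    finally have "(\<Sum>S\<in>Pow I. P S i) \<ge> 2 ^ card J * (2 * K)"
      using IJ(3) by (simp add: card_Pow)
    moreover have "card I = Suc (card J)" using IJ by simp
    ultimately show ?thesis by simp
  qed
  have "(\<Sum>S\<in>Pow I. \<Sum>i\<in>I. P S i) = (\<Sum>i\<in>I. \<Sum>S\<in>Pow I. P S i)" by (rule sum.swap)
  also have "\<dots> \<ge> (\<Sum>i\<in>I. 2 ^ card I * K)" by (rule sum_mono) (rule each)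
  finally have ge: "(\<Sum>S\<in>Pow I. \<Sum>i\<in>I. P S i) \<ge> real (card I) * (2 ^ card I * K)" by simp
  have "(\<Sum>S\<in>Pow I. \<Sum>i\<in>I. P S i) < (\<Sum>S\<in>Pow I. real (card I) * K)"
    by (rule sum_strict_mono) (use fI lt in auto)
  also have "\<dots> = 2 ^ card I * (real (card I) * K)" using fI by (simp add: card_Pow)
  finally show False using ge by (simp add: algebra_simps)
qed


lemma expect_eq:
  assumes tr: "\<forall>T\<in>set_pmf p. spanning_tree (sV n) (sE n) sends T" and S: "S \<subseteq> {1..n}"
  shows "measure_pmf.expectation p (tree_weight (wS S)) =
         (\<Sum>i\<in>{1..n}. measure_pmf.prob p {T. hv S i \<in> T})"
proof -
  have sub: "set_pmf p \<subseteq> Pow (sE n)" using tr unfolding spanning_tree_def by auto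
  have fin: "finite (set_pmf p)" by (rule finite_subset[OF sub]) (simp add: sE_def)
  have "measure_pmf.expectation p (tree_weight (wS S)) =
        measure_pmf.expectation p (\<lambda>T. \<Sum>i\<in>{1..n}. indicator {T. hv S i \<in> T} T)"
  proof (rule integral_cong_AE)
    show "AE T in measure_pmf p. tree_weight (wS S) T = (\<Sum>i\<in>{1..n}. indicator {T. hv S i \<in> T} T)"
    proof (rule AE_pmfI)
      fix T assume "T \<in> set_pmf p"
      then have "T \<subseteq> sE n" using sub by auto
      then show "tree_weight (wS S) T = (\<Sum>i\<in>{1..n}. indicator {T. hv S i \<in> T} T)"
        by (rule tw_eq[OF _ S])
    qed
  qed simp_all
  also have "\<dots> = (\<Sum>i\<in>{1..n}. measure_pmf.expectation p (indicator {T. hv S i \<in> T}))"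
    by (rule Bochner_Integration.integral_sum) (rule integrable_measure_pmf_finite[OF fin])
  also have "\<dots> = (\<Sum>i\<in>{1..n}. measure_pmf.prob p {T. hv S i \<in> T})"
    by simp
  finally show ?thesis .
qed

lemma small_bound:
  "\<exists>\<epsilon>0 > 0. \<exists>\<delta>0 > 0. \<forall>e d. 0 \<le> e \<and> e < \<epsilon>0 \<and> 0 \<le> d \<and> d < \<delta>0 \<longrightarrow>
            alpha_bound (n + 1) e d \<ge> 0.49 * (real (n + 1) - 1)"
proof (intro exI[of _ "1/1000"] conjI allI impI exI[of _ "1/1000"])
  fix e d :: real
  assume h: "0 \<le> e \<and> e < 1/1000 \<and> 0 \<le> d \<and> d < 1/1000"
  have x1: "exp e \<le> 1 + 2 * e" by (rule real_exp_bound_lemma) (use h in auto)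
  have x2: "exp (2*e) \<le> 1 + 2 * (2*e)" by (rule real_exp_bound_lemma) (use h in auto)
  have X: "(1 + exp e) * d \<le> (2 + 2/1000) * (1/1000)"
    by (rule mult_mono) (use x1 h in auto)
  have lin: "X \<le> (2 + 2/1000) * (1/1000) \<Longrightarrow> Y \<le> 1 + 2 * (2*e) \<Longrightarrow> e < 1/1000 \<Longrightarrow>
      49/100 * (1 + Y) \<le> 1 - X" for X Y :: real by (simp add: field_simps)
  have N: "1 - (1 + exp e) * d \<ge> 49/100 * (1 + exp (2*e))" using lin[OF X x2] h by blast
  have Dp: "1 + exp (2*e) > 0" by (rule add_pos_pos) simp_all
  have q: "(1 - (1 + exp e) * d) / (1 + exp (2*e)) \<ge> 49/100"
    using N Dp by (simp add: pos_le_divide_eq)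
  have "alpha_bound (n + 1) e d = real n * ((1 - (1 + exp e) * d) / (1 + exp (2*e)))"
    unfolding alpha_bound_def by simp
  also have "\<dots> \<ge> real n * (49/100)" by (rule mult_left_mono[OF q]) simp
  finally show "alpha_bound (n + 1) e d \<ge> 0.49 * (real (n + 1) - 1)" by simp
qed simp_all

theorem theoremB1:
  fixes n :: nat and \<epsilon> \<delta> :: real
  assumes "n \<ge> 1" and "0 \<le> \<epsilon>" and "0 \<le> \<delta>"
  shows "(\<exists>(V :: nat set) (E :: nat set) (ends :: nat \<Rightarrow> nat \<times> nat).
            multigraph V E ends \<and> card V = n + 1 \<and> connected_by V ends E \<and>
            (\<forall>A :: (nat \<Rightarrow> real) \<Rightarrow> nat set pmf.
               edge_dp \<epsilon> \<delta> E A \<and> (\<forall>w. \<forall>T\<in>set_pmf (A w). spanning_tree V E ends T) \<longrightarrow>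
               (\<exists>w. (\<forall>e\<in>E. w e \<in> {0, 1}) \<and>
                    measure_pmf.expectation (A w) (tree_weight w) - mst_weight V E ends w
                      \<ge> alpha_bound (card V) \<epsilon> \<delta>)))
       \<and> (\<exists>\<epsilon>0 > 0. \<exists>\<delta>0 > 0. \<forall>e d. 0 \<le> e \<and> e < \<epsilon>0 \<and> 0 \<le> d \<and> d < \<delta>0 \<longrightarrow>
            alpha_bound (n + 1) e d \<ge> 0.49 * (real (n + 1) - 1))"
proof (rule conjI[OF _ small_bound])
  have ediv: "e div 2 \<in> {1..n}" if "e \<in> sE n" for e using that unfolding sE_def by auto
  have mg: "multigraph (sV n) (sE n) sends"
    unfolding multigraph_def
  proof (intro conjI ballI)
    fix e assume "e \<in> sE n"
    then show "fst (sends e) \<in> sV n" "snd (sends e) \<in> sV n" "fst (sends e) \<noteq> snd (sends e)"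
      using ediv[of e] unfolding sends_def sV_def by auto
  qed (simp_all add: sV_def sE_def)
  have cV: "card (sV n) = n + 1" by (simp add: sV_def)
  have cE: "connected_by (sV n) sends (sE n)"
  proof (rule conn_lemma, intro ballI impI)
    fix v assume "v \<in> sV n" "v \<noteq> 0"
    then have "2 * v \<in> sE n" "sends (2 * v) = (0, v)" unfolding sV_def sE_def sends_def by auto
    then show "\<exists>e\<in>sE n. sends e = (0, v)" by blast
  qed
  define K where "K = (1 - (1 + exp \<epsilon>) * \<delta>) / (1 + exp (2 * \<epsilon>))"
  have main: "\<exists>w. (\<forall>e\<in>sE n. w e \<in> {0, 1}) \<and>
                 measure_pmf.expectation (A w) (tree_weight w) - mst_weight (sV n) (sE n) sends w
                   \<ge> alpha_bound (card (sV n)) \<epsilon> \<delta>"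
    if dp: "edge_dp \<epsilon> \<delta> (sE n) A" and tr: "\<forall>w. \<forall>T\<in>set_pmf (A w). spanning_tree (sV n) (sE n) sends T"
    for A :: "(nat \<Rightarrow> real) \<Rightarrow> nat set pmf"
  proof -
    define P where "P S i = measure_pmf.prob (A (wS S)) {T. hv S i \<in> T}" for S i
    have "\<exists>S\<subseteq>{1..n}. (\<Sum>i\<in>{1..n}. P S i) \<ge> real (card {1..n}) * K"
    proof (rule avg)
      fix S i assume "S \<subseteq> {1..n}" "i \<in> {1..n}" "i \<notin> S"
      then show "P S i + P (insert i S) i \<ge> 2 * K"
        unfolding P_def K_def by (rule pair_bound[OF dp tr])
    qed simp
    then obtain S where S: "S \<subseteq> {1..n}" "(\<Sum>i\<in>{1..n}. P S i) \<ge> real n * K" by auto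
    have ex: "measure_pmf.expectation (A (wS S)) (tree_weight (wS S)) = (\<Sum>i\<in>{1..n}. P S i)"
      unfolding P_def using expect_eq[OF _ S(1)] tr by blast
    have al: "alpha_bound (card (sV n)) \<epsilon> \<delta> = real n * K"
      unfolding alpha_bound_def K_def cV by simp
    show ?thesis
    proof (intro exI[of _ "wS S"] conjI ballI)
      fix e show "wS S e \<in> {0, 1}" by (simp add: wS_def)
    next
      show "measure_pmf.expectation (A (wS S)) (tree_weight (wS S)) - mst_weight (sV n) (sE n) sends (wS S)
              \<ge> alpha_bound (card (sV n)) \<epsilon> \<delta>"
        using ex al S(2) mst_le0[OF S(1)] by linarith
    qed
  qed
  show "\<exists>(V :: nat set) (E :: nat set) (ends :: nat \<Rightarrow> nat \<times> nat).
            multigraph V E ends \<and> card V = n + 1 \<and> connected_by V ends E \<and>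
            (\<forall>A :: (nat \<Rightarrow> real) \<Rightarrow> nat set pmf.
               edge_dp \<epsilon> \<delta> E A \<and> (\<forall>w. \<forall>T\<in>set_pmf (A w). spanning_tree V E ends T) \<longrightarrow>
               (\<exists>w. (\<forall>e\<in>E. w e \<in> {0, 1}) \<and>
                    measure_pmf.expectation (A w) (tree_weight w) - mst_weight V E ends w
                      \<ge> alpha_bound (card V) \<epsilon> \<delta>))"
    using mg cV cE main by blast
qed

end
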